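(* With $L_\infty$, $L_\infty^\pm$ and $d(n)$ as in the context, $$L_\infty=\tfrac1{n+1}L^+_\infty+O(\eta^{n+1})\ \text{ as }\eta=1-s\to0^+,\qquad L_\infty=\tfrac1{d(n)}L^-_\infty+O(s^{\frac{n+1}{n}})\ \text{ as }s\to0^+,$$ in the following sense: the zeroth-order coefficients agree, and each coefficient of $\partial^2$ and of $\partial$ of $L_\infty$ equals the corresponding coefficient of the model operator (written in the same variable) times $1+O(\epsilon)$, with $\epsilon=\eta^{n+1}$ resp. $\epsilon=s^{(n+1)/n}$.
   Context: Fix $n\ge2$ and let $c(n):=\int_0^\infty(e^\xi-1)^{-1/(n+1)}d\xi$, $d(n):=\big(\frac{n}{n+1}\big)^{1/n}c(n)^{\frac{n+1}{n}}$. Define $\Phi_\infty:(0,1)\to(0,\infty)$ by $\int_0^{\Phi_\infty(s)}(e^\xi-1)^{-1/(n+1)}d\xi=c(n)\,s$ (then $\Phi_\infty',\Phi_\infty''>0$), and define the ordinary differential operator on $(0,1)$ $$L_\infty u:=\frac{u''}{\Phi_\infty''}+(n-1)\frac{u'}{\Phi_\infty'}-u,$$ (primes are $d/ds$; this is the collapsed limit of $\Delta-\mathrm{Id}$ on radial functions on the neck). Write $\eta:=1-s$. Model operators: $L^+_\infty:=\eta^2\partial^2_{\eta\eta}-(n-1)\eta\partial_\eta-(n+1)\mathrm{Id}$ and $L^-_\infty:=n s^{\frac{n-1}{n}}\partial^2_{ss}+(n-1)s^{-\frac1n}\partial_s-d(n)\mathrm{Id}$. *)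

theory Defs
  imports "HOL-Analysis.Analysis" "HOL-Library.Landau_Symbols"
begin

definition kern :: "nat \<Rightarrow> real \<Rightarrow> real" where
  "kern n \<xi> = (exp \<xi> - 1) powr (- 1 / (real n + 1))"

definition c_const :: "nat \<Rightarrow> real" where
  "c_const n = integral {0<..} (kern n)"

definition d_const :: "nat \<Rightarrow> real" where
  "d_const n = (real n / (real n + 1)) powr (1 / real n)
               * c_const n powr ((real n + 1) / real n)"

definition Phi_inf :: "nat \<Rightarrow> real \<Rightarrow> real" where
  "Phi_inf n s = (THE x. 0 < x \<and> integral {0..x} (kern n) = c_const n * s)"

definition Linf :: "nat \<Rightarrow> (real \<Rightarrow> real) \<Rightarrow> real \<Rightarrow> real" where
  "Linf n u s = deriv (deriv u) s / deriv (deriv (Phi_inf n)) s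
              + (real n - 1) * deriv u s / deriv (Phi_inf n) s - u s"

definition Linf_c2 :: "nat \<Rightarrow> real \<Rightarrow> real" where
  "Linf_c2 n s = 1 / deriv (deriv (Phi_inf n)) s"
definition Linf_c1 :: "nat \<Rightarrow> real \<Rightarrow> real" where
  "Linf_c1 n s = (real n - 1) / deriv (Phi_inf n) s"
definition Linf_c0 :: "nat \<Rightarrow> real \<Rightarrow> real" where
  "Linf_c0 n s = -1"

text \<open>Model operator L^+ in the variable eta = 1 - s:
  eta^2 d^2/deta^2 - (n-1) eta d/deta - (n+1).\<close>
definition Lplus_c2 :: "nat \<Rightarrow> real \<Rightarrow> real" where
  "Lplus_c2 n \<eta> = \<eta>^2"
definition Lplus_c1 :: "nat \<Rightarrow> real \<Rightarrow> real" where
  "Lplus_c1 n \<eta> = - (real n - 1) * \<eta>"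
definition Lplus_c0 :: "nat \<Rightarrow> real \<Rightarrow> real" where
  "Lplus_c0 n \<eta> = - (real n + 1)"

definition Lminus_c2 :: "nat \<Rightarrow> real \<Rightarrow> real" where
  "Lminus_c2 n s = real n * s powr ((real n - 1) / real n)"
definition Lminus_c1 :: "nat \<Rightarrow> real \<Rightarrow> real" where
  "Lminus_c1 n s = (real n - 1) * s powr (- 1 / real n)"
definition Lminus_c0 :: "nat \<Rightarrow> real \<Rightarrow> real" where
  "Lminus_c0 n s = - d_const n"

end

theory Submission imports Defs begin

lemma alg2: "a \<noteq> 0 \<Longrightarrow> cc \<noteq> 0 \<Longrightarrow> (X::real) \<noteq> 0 \<Longrightarrow> w \<noteq> 0 \<Longrightarrow>
  z2 / (cc\<^sup>2 * a * X * X) = a * ((1 / X) * w / (a * cc))\<^sup>2 * (z2 / w\<^sup>2)"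
  by (simp add: power2_eq_square field_simps)
lemma alg1: "a \<noteq> 0 \<Longrightarrow> cc \<noteq> 0 \<Longrightarrow> (X::real) \<noteq> 0 \<Longrightarrow> w \<noteq> 0 \<Longrightarrow> z1 \<noteq> 0 \<Longrightarrow>
  - q / (cc * X * z1) = a * (- q * ((1 / X) * w / (a * cc))) * (1 / z1 / w)"
  by (simp add: field_simps)

lemma pw_le1: "0 < (r::real) \<Longrightarrow> r \<le> 1 \<Longrightarrow> 0 \<le> p \<Longrightarrow> p \<le> 1 \<Longrightarrow> r \<le> r powr p \<and> r powr p \<le> 1"
  using powr_mono'[of p 1 r] powr_mono'[of 0 p r] by auto

lemma pw_ge1: "1 \<le> (r::real) \<Longrightarrow> 0 \<le> p \<Longrightarrow> p \<le> 1 \<Longrightarrow> 1 \<le> r powr p \<and> r powr p \<le> r"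
  using powr_mono[of p 1 r] powr_mono[of 0 p r] by auto

lemma pw_neg: "0 < (r::real) \<Longrightarrow> r \<le> 1 \<Longrightarrow> 0 \<le> p \<Longrightarrow> p \<le> 1 \<Longrightarrow> 1 \<le> r powr (-p) \<and> r powr (-p) \<le> 1 / r"
  using powr_mono'[of "-p" 0 r] powr_mono'[of "-1" "-p" r] by (auto simp: powr_neg_one)

lemma inv_bound: "0 \<le> (t::real) \<Longrightarrow> t \<le> 1/2 \<Longrightarrow> 1 / (1 - t) \<le> 1 + 2 * t"
proof -
  assume t: "0 \<le> t" "t \<le> 1/2"
  have "(1 + 2 * t) * (1 - t) = 1 + t * (1 - 2 * t)" by (simp add: algebra_simps)
  moreover have "0 \<le> t * (1 - 2 * t)" using t by (intro mult_nonneg_nonneg) auto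
  ultimately have "1 \<le> (1 + 2 * t) * (1 - t)" by linarith
  thus ?thesis using t by (subst divide_le_eq) auto
qed

lemma exp_le_inv: "0 \<le> (x::real) \<Longrightarrow> x < 1 \<Longrightarrow> exp x \<le> 1 / (1 - x)"
proof -
  assume x: "0 \<le> x" "x < 1"
  have "1 - x \<le> exp (- x)" using exp_ge_add_one_self[of "-x"] by simp
  hence "(1 - x) * exp x \<le> 1" by (simp add: exp_minus field_simps)
  thus ?thesis using x by (subst le_divide_eq) (auto simp: mult.commute)
qed

lemma bnd_prod3: "0 \<le> (x::real) \<Longrightarrow> x \<le> 1/2 \<Longrightarrow> 1 \<le> A \<Longrightarrow> A \<le> 1+2*x \<Longrightarrow> 1-x \<le> B \<Longrightarrow> B \<le> 1
   \<Longrightarrow> 1 \<le> C \<Longrightarrow> C \<le> 1+2*x \<Longrightarrow> \<bar>A*B*C - 1\<bar> \<le> 6*x"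
proof -
  assume h: "0 \<le> x" "x \<le> 1/2" "1 \<le> A" "A \<le> 1+2*x" "1-x \<le> B" "B \<le> 1" "1 \<le> C" "C \<le> 1+2*x"
  have B0: "0 \<le> B" using h by simp
  have "A * B * C \<le> (1+2*x) * 1 * (1+2*x)"
    using h B0 by (intro mult_mono) auto
  moreover have "(1+2*x) * 1 * (1+2*x) \<le> 1 + 6 * x"
  proof -
    have "(1+2*x) * 1 * (1+2*x) = 1 + 4*x + 4*(x*x)" by (simp add: algebra_simps)
    moreover have "x*x \<le> x*(1/2)" using h by (intro mult_left_mono) auto
    ultimately show ?thesis by linarith
  qed
  moreover have "1 * (1-x) * 1 \<le> A * B * C" using h by (intro mult_mono) auto
  ultimately show ?thesis using h by auto
qed

lemma bnd_prod2: "0 \<le> (x::real) \<Longrightarrow> x \<le> 1/2 \<Longrightarrow> 1-2*x \<le> A \<Longrightarrow> A \<le> 1 \<Longrightarrow> 1-x \<le> B \<Longrightarrow> B \<le> 1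
   \<Longrightarrow> \<bar>A*B - 1\<bar> \<le> 3*x"
proof -
  assume h: "0 \<le> x" "x \<le> 1/2" "1-2*x \<le> A" "A \<le> 1" "1-x \<le> B" "B \<le> 1"
  have "(1-2*x) * (1-x) \<le> A * B" using h by (intro mult_mono) auto
  moreover have "(1-2*x) * (1-x) = 1 - 3 * x + 2 * x * x" by (simp add: algebra_simps)
  moreover have "0 \<le> 2 * x * x" by simp
  moreover have "A * B \<le> 1 * 1" using h by (intro mult_mono) auto
  ultimately have "1 - 3*x \<le> A*B" "A*B \<le> 1" by linarith+
  thus ?thesis using h by (auto simp: abs_if)
qed

lemma bnd_n2: "0 \<le> (E::real) \<Longrightarrow> E \<le> 1/2 \<Longrightarrow> 0 \<le> th \<Longrightarrow> th \<le> E \<Longrightarrow> 1-E \<le> z \<Longrightarrow> z \<le> 1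
   \<Longrightarrow> \<bar>z / (1+th)^2 - 1\<bar> \<le> 3*E"
proof -
  assume h: "0 \<le> E" "E \<le> 1/2" "0 \<le> th" "th \<le> E" "1-E \<le> z" "z \<le> 1"
  have w1: "1 \<le> (1+th)^2" using h by simp
  have w2: "(1+th)^2 \<le> (1+E)^2" using h by (intro power_mono) auto
  have "z \<le> (1+th)^2" using h w1 by linarith
  hence "z / (1+th)^2 \<le> 1" using w1 by (simp add: divide_le_eq)
  moreover have key: "(1 - 3*E) * (1+E)^2 \<le> 1 - E"
  proof -
    have "(1 - 3*E) * (1+E)^2 = 1 - E - E*E*(5 + 3*E)" by (simp add: algebra_simps power2_eq_square)
    moreover have "0 \<le> E*E*(5+3*E)" using h by simp
    ultimately show ?thesis by linarith
  qed
  moreover have "(1 - 3*E) * (1+th)^2 \<le> z"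
  proof (cases "1 - 3*E \<le> 0")
    case True
    hence "(1 - 3*E) * (1+th)^2 \<le> 0" by (intro mult_nonpos_nonneg) auto
    thus ?thesis using h by linarith
  next
    case False
    hence "(1 - 3*E) * (1+th)^2 \<le> (1 - 3*E) * (1+E)^2" using w2 by (intro mult_left_mono) auto
    thus ?thesis using key h by linarith
  qed
  hence "1 - 3*E \<le> z / (1+th)^2" using w1 h by (simp add: le_divide_eq)
  ultimately show ?thesis by auto
qed

lemma bnd_n1: "0 \<le> (E::real) \<Longrightarrow> E \<le> 1/2 \<Longrightarrow> 0 \<le> th \<Longrightarrow> th \<le> E \<Longrightarrow> 1 \<le> z \<Longrightarrow> z \<le> 1+2*E
   \<Longrightarrow> \<bar>z / (1+th) - 1\<bar> \<le> 2*E"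
proof -
  assume h: "0 \<le> E" "E \<le> 1/2" "0 \<le> th" "th \<le> E" "1 \<le> z" "z \<le> 1+2*E"
  have "z / (1+th) \<le> z" using h by (simp add: divide_le_eq)
  moreover have "(1 - 2*E) * (1+th) \<le> 1"
  proof -
    have "(1 - 2*E) * (1+th) \<le> (1 - 2*E) * (1+E)" using h by (intro mult_left_mono) auto
    also have "\<dots> = 1 - E - 2*E*E" by (simp add: algebra_simps)
    finally show ?thesis using h by (smt (verit) mult_nonneg_nonneg)
  qed
  hence "1 - 2*E \<le> z / (1+th)" using h by (simp add: le_divide_eq)
  ultimately show ?thesis using h by auto
qed

lemma ln_id2: "(N::real) * k = 1 \<Longrightarrow> a * (N + 1) = 1 \<Longrightarrow> b = N * a \<Longrightarrow> Lb = LN + La \<Longrightarrow> Ls = b*Lx + Lt - Lb - Lc \<Longrightarrow>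
  -(2*Lc + La + (2*a-1)*Ly + x) = -(k*Lb + (1+k)*Lc) + LN + (1-k)*Ls + (1-2*a)*(Ly - Lx) - x - (1-k)*Lt"
  by algebra
lemma ln_id1: "(N::real) * k = 1 \<Longrightarrow> b = N * a \<Longrightarrow> Ls = b*Lx + Lt - Lb - Lc \<Longrightarrow>
  -(Lc + a*Ly) = -(k*Lb + (1+k)*Lc) + (-k)*Ls + a*(Lx - Ly) + k*Lt"
  by algebra

lemma witness:
  fixes L M g R :: "real \<Rightarrow> real"
  assumes "eventually (\<lambda>s. \<exists>r. L s = M s * (1 + r) \<and> \<bar>r\<bar> \<le> K * \<bar>g s\<bar>) F"
  shows "\<exists>h. h \<in> O[F](g) \<and> (\<forall>\<^sub>F s in F. L s = M s * (1 + h s))"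
proof -
  define h where "h s = (SOME r. L s = M s * (1 + r) \<and> \<bar>r\<bar> \<le> K * \<bar>g s\<bar>)" for s
  have ev: "eventually (\<lambda>s. L s = M s * (1 + h s) \<and> \<bar>h s\<bar> \<le> K * \<bar>g s\<bar>) F"
    using assms by (rule eventually_mono) (unfold h_def, rule someI_ex)
  have "h \<in> O[F](g)"
    by (rule bigoI[where c = K]) (use ev in \<open>auto elim!: eventually_mono\<close>)
  moreover have "\<forall>\<^sub>F s in F. L s = M s * (1 + h s)" using ev by (rule eventually_mono) auto
  ultimately show ?thesis by blast
qed

locale L = fixes n :: nat assumes n1: "1 \<le> n"
begin

definition a :: real where "a = 1 / (real n + 1)"
definition b :: real where "b = 1 - a"

lemma a_pos: "0 < a" and a_le: "a \<le> 1/2" and a_lt1: "a < 1"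
  and b_pos: "0 < b" and b_eq: "b = real n * a" and na: "(real n + 1) * a = 1"
  using n1 by (auto simp: a_def b_def field_simps)

lemma kern_eq: "kern n x = (exp x - 1) powr (- a)"
  unfolding kern_def a_def by simp

lemma kern_pos: "0 < x \<Longrightarrow> 0 < kern n x"
  unfolding kern_eq by simp

lemma kern_nonneg: "0 \<le> kern n x"
  unfolding kern_eq by simp

lemma kern_upper0: assumes "0 < x" shows "kern n x \<le> x powr (- a)"
proof -
  have "x \<le> exp x - 1" using exp_ge_add_one_self[of x] by linarith
  thus ?thesis unfolding kern_eq using assms a_pos
    by (intro powr_mono2') auto
qed

lemma kern_lower0: assumes "0 < x" shows "x powr (- a) * (1 - a * x) \<le> kern n x"
proof -
  have e1: "exp x - 1 \<le> x * exp x"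
  proof -
    have "1 - x \<le> exp (-x)" using exp_ge_add_one_self[of "-x"] by simp
    hence "(1 - x) * exp x \<le> exp (-x) * exp x" by (intro mult_right_mono) auto
    thus ?thesis by (simp add: exp_minus field_simps)
  qed
  have pos: "0 < exp x - 1" using assms by simp
  have "(x * exp x) powr (-a) \<le> (exp x - 1) powr (-a)"
    using e1 pos a_pos by (intro powr_mono2') auto
  moreover have "(x * exp x) powr (-a) = x powr (-a) * exp (- a * x)"
    using assms by (simp add: powr_mult powr_def ln_mult exp_add[symmetric] algebra_simps)
  moreover have "1 - a * x \<le> exp (- a * x)" using exp_ge_add_one_self[of "-a*x"] by simp
  ultimately show ?thesis unfolding kern_eq
    by (smt (verit, best) mult_left_mono powr_ge_zero)
qed

lemma kern_tail: assumes "1 \<le> x"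
  shows "exp (- a * x) \<le> kern n x" "kern n x \<le> exp (- a * x) * (1 + 2 * exp (- x))"
proof -
  define u where "u = exp (-x)"
  have u: "0 < u" "u \<le> 1/2" unfolding u_def using assms exp_ge_add_one_self[of 1]
    by (auto simp: exp_minus field_simps) (smt (verit) exp_ge_add_one_self exp_le_cancel_iff assms)
  have eq: "exp x - 1 = exp x * (1 - u)" unfolding u_def by (simp add: exp_minus field_simps)
  have k: "kern n x = exp (- a * x) * (1 - u) powr (- a)"
  proof -
    have "(exp x * (1 - u)) powr (- a) = exp x powr (-a) * (1 - u) powr (- a)"
      using u by (simp add: powr_mult)
    moreover have "exp x powr (-a) = exp (- a * x)" by (simp add: powr_def)
    ultimately show ?thesis unfolding kern_eq eq by simp
  qed
  have p1: "1 \<le> (1 - u) powr (- a)"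
    using u a_pos powr_mono'[of "-a" 0 "1-u"] by auto
  show "exp (- a * x) \<le> kern n x" unfolding k using p1 by simp
  have "(1 - u) powr (- a) \<le> (1 - u) powr (- 1)"
    using u a_lt1 by (intro powr_mono') auto
  also have "\<dots> = 1 / (1 - u)" using u by (simp add: powr_neg_one)
  also have "\<dots> \<le> 1 + 2 * u"
  proof -
    have "(1 + 2 * u) * (1 - u) = 1 + u * (1 - 2 * u)" by (simp add: algebra_simps)
    moreover have "0 \<le> u * (1 - 2 * u)" using u by (intro mult_nonneg_nonneg) auto
    ultimately have "1 \<le> (1 + 2 * u) * (1 - u)" by linarith
    thus ?thesis using u by (subst divide_le_eq) auto
  qed
  finally show "kern n x \<le> exp (- a * x) * (1 + 2 * exp (- x))"
    unfolding k u_def by simp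
qed


definition F :: "real \<Rightarrow> real" where "F x = integral {0..x} (kern n)"
definition T :: "real \<Rightarrow> real" where "T x = integral {x..} (kern n)"

lemma kern_cont: "continuous_on {0<..} (kern n)"
proof -
  have "continuous_on {0<..} (\<lambda>\<xi>::real. (exp \<xi> - 1) powr (- a))"
    by (intro continuous_intros) auto
  thus ?thesis unfolding kern_eq[abs_def] .
qed

lemma kern_0: "kern n 0 = 0" unfolding kern_eq by simp

lemma int0: assumes "0 \<le> x" shows "kern n integrable_on {0..x}"
proof -
  have cont: "continuous_on {0<..x} (kern n)" using kern_cont by (rule continuous_on_subset) auto
  have "kern n absolutely_integrable_on {0<..x}"
  proof (rule measurable_bounded_by_integrable_imp_absolutely_integrable)
    show "kern n \<in> borel_measurable (lebesgue_on {0<..x})"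
      by (rule continuous_imp_measurable_on_sets_lebesgue[OF cont]) auto
    show "{0<..x} \<in> sets lebesgue" by auto
    show "(\<lambda>\<xi>. \<xi> powr (- a)) integrable_on {0<..x}"
      using a_lt1 assms by (intro integrable_on_powr_from_0') auto
    show "norm (kern n \<xi>) \<le> \<xi> powr (- a)" if "\<xi> \<in> {0<..x}" for \<xi>
      using kern_upper0[of \<xi>] kern_nonneg[of \<xi>] that by auto
  qed
  hence "kern n integrable_on {0<..x}" by (simp add: absolutely_integrable_on_def)
  thus ?thesis
    by (rule integrable_spike_set) (auto simp: kern_0 intro: negligible_subset[of "{}"])
qed

lemma exp_int: "((\<lambda>\<xi>. exp (- a * \<xi>)) has_integral exp (- a * x) / a) {x..}"
  using has_integral_exp_minus_to_infinity[of a x] a_pos by simp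

lemma int_tail: assumes "1 \<le> x" shows "kern n integrable_on {x..}"
proof -
  have cont: "continuous_on {x..} (kern n)" using kern_cont by (rule continuous_on_subset) (use assms in auto)
  have "kern n absolutely_integrable_on {x..}"
  proof (rule measurable_bounded_by_integrable_imp_absolutely_integrable)
    show "kern n \<in> borel_measurable (lebesgue_on {x..})"
      by (rule continuous_imp_measurable_on_sets_lebesgue[OF cont]) auto
    show "{x..} \<in> sets lebesgue" by auto
    show "(\<lambda>\<xi>. 3 * exp (- a * \<xi>)) integrable_on {x..}"
      using has_integral_cmul[OF exp_int, of 3] by (auto simp: integrable_on_def)
    show "norm (kern n \<xi>) \<le> 3 * exp (- a * \<xi>)" if "\<xi> \<in> {x..}" for \<xi>
    proof -
      have "exp (- \<xi>) \<le> 1" using that assms by simp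
      hence "exp (- a * \<xi>) * (1 + 2 * exp (- \<xi>)) \<le> exp (- a * \<xi>) * 3"
        by (intro mult_left_mono) auto
      moreover have "kern n \<xi> \<le> exp (- a * \<xi>) * (1 + 2 * exp (- \<xi>))"
        using kern_tail(2)[of \<xi>] that assms by auto
      ultimately have "kern n \<xi> \<le> 3 * exp (- a * \<xi>)" by linarith
      thus ?thesis using kern_nonneg[of \<xi>] by simp
    qed
  qed
  thus ?thesis by (simp add: absolutely_integrable_on_def)
qed

lemma F_upper: assumes "0 \<le> x" shows "F x \<le> x powr b / b"
proof -
  have "((\<lambda>\<xi>. \<xi> powr (- a)) has_integral (x powr (- a + 1) / (- a + 1))) {0..x}"
    using a_lt1 assms by (intro has_integral_powr_from_0) auto
  hence i: "((\<lambda>\<xi>. \<xi> powr (- a)) has_integral (x powr b / b)) {0..x}"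
    by (simp add: b_def)
  show ?thesis unfolding F_def
  proof (rule has_integral_le[OF integrable_integral[OF int0[OF assms]] i])
    show "kern n \<xi> \<le> \<xi> powr (- a)" if "\<xi> \<in> {0..x}" for \<xi>
      using that kern_upper0[of \<xi>] by (cases "\<xi> = 0") (auto simp: kern_0)
  qed
qed

lemma F_lower: assumes "0 \<le> x" shows "x powr b / b - a * (x powr (b + 1) / (b + 1)) \<le> F x"
proof -
  have "((\<lambda>\<xi>. \<xi> powr (- a)) has_integral (x powr (- a + 1) / (- a + 1))) {0..x}"
    using a_lt1 assms by (intro has_integral_powr_from_0) auto
  hence i1: "((\<lambda>\<xi>. \<xi> powr (- a)) has_integral (x powr b / b)) {0..x}"
    by (simp add: b_def)
  have "((\<lambda>\<xi>. \<xi> powr b) has_integral (x powr (b + 1) / (b + 1))) {0..x}"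
    using b_pos assms by (intro has_integral_powr_from_0) auto
  from has_integral_diff[OF i1 has_integral_cmul[OF this, of a]]
  have i: "((\<lambda>\<xi>. \<xi> powr (- a) - a * \<xi> powr b) has_integral
      (x powr b / b - a * (x powr (b + 1) / (b + 1)))) {0..x}" by simp
  show ?thesis unfolding F_def
  proof (rule has_integral_le[OF i integrable_integral[OF int0[OF assms]]])
    show "\<xi> powr (- a) - a * \<xi> powr b \<le> kern n \<xi>" if "\<xi> \<in> {0..x}" for \<xi>
    proof (cases "\<xi> = 0")
      case True thus ?thesis by (simp add: kern_0)
    next
      case False
      hence p: "0 < \<xi>" using that by auto
      have "\<xi> powr b = \<xi> powr (- a) * \<xi>"
        using p powr_add[of \<xi> "-a" 1] by (simp add: b_def)
      hence "\<xi> powr (- a) - a * \<xi> powr b = \<xi> powr (- a) * (1 - a * \<xi>)"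
        by (simp add: algebra_simps)
      thus ?thesis using kern_lower0[OF p] by simp
    qed
  qed
qed

lemma T_bounds: assumes "1 \<le> x"
  shows "exp (- a * x) / a \<le> T x"
    "T x \<le> exp (- a * x) / a + 2 * exp (- (1 + a) * x) / (1 + a)"
proof -
  show "exp (- a * x) / a \<le> T x" unfolding T_def
    by (rule has_integral_le[OF exp_int integrable_integral[OF int_tail[OF assms]]])
       (use kern_tail(1) assms in auto)
  have e2: "((\<lambda>\<xi>. exp (- (1 + a) * \<xi>)) has_integral exp (- (1 + a) * x) / (1 + a)) {x..}"
    using has_integral_exp_minus_to_infinity[of "1 + a" x] a_pos by simp
  from has_integral_add[OF exp_int has_integral_cmul[OF e2, of 2]]
  have i: "((\<lambda>\<xi>. exp (- a * \<xi>) + 2 * exp (- (1 + a) * \<xi>)) has_integral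
     (exp (- a * x) / a + 2 * exp (- (1 + a) * x) / (1 + a))) {x..}" by simp
  show "T x \<le> exp (- a * x) / a + 2 * exp (- (1 + a) * x) / (1 + a)" unfolding T_def
  proof (rule has_integral_le[OF integrable_integral[OF int_tail[OF assms]] i])
    show "kern n \<xi> \<le> exp (- a * \<xi>) + 2 * exp (- (1 + a) * \<xi>)" if "\<xi> \<in> {x..}" for \<xi>
    proof -
      have "exp (- (1 + a) * \<xi>) = exp (- a * \<xi>) * exp (- \<xi>)"
        by (simp add: exp_add[symmetric] algebra_simps)
      thus ?thesis using kern_tail(2)[of \<xi>] that assms by (simp add: algebra_simps)
    qed
  qed
qed

lemma c_split: assumes "1 \<le> x" shows "c_const n = F x + T x"
proof -
  have "(kern n has_integral (F x + T x)) ({0..x} \<union> {x..})"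
    unfolding F_def T_def
    by (rule has_integral_Un[OF integrable_integral[OF int0] integrable_integral[OF int_tail]])
       (use assms in auto)
  moreover have "{0..x} \<union> {x..} = {0::real..}" using assms by auto
  ultimately have "(kern n has_integral (F x + T x)) {0..}" by simp
  hence "(kern n has_integral (F x + T x)) {0<..}"
    by (subst (asm) has_integral_spike_set_eq) (auto simp: kern_0 intro: negligible_subset[of "{}"])
  thus ?thesis unfolding c_const_def by (rule integral_unique)
qed


lemma F_deriv: assumes "0 < x" shows "(F has_real_derivative kern n x) (at x)"
proof -
  define p where "p = x / 2"
  define q where "q = 2 * x"
  have pq: "0 < p" "p < x" "x < q" using assms by (auto simp: p_def q_def)
  have cont: "continuous_on {p..q} (kern n)" using kern_cont by (rule continuous_on_subset) (use pq in auto)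
  have "((\<lambda>y. integral {p..y} (kern n)) has_real_derivative kern n x) (at x within {p..q})"
    by (rule integral_has_real_derivative[OF cont]) (use pq in auto)
  hence "((\<lambda>y. integral {p..y} (kern n)) has_real_derivative kern n x) (at x)"
    using at_within_interior[of x "{p..q}"] pq by simp
  hence d: "((\<lambda>y. F p + integral {p..y} (kern n)) has_real_derivative kern n x) (at x)"
    by (auto intro!: derivative_eq_intros)
  show ?thesis
  proof (rule has_field_derivative_transform_within_open[OF d, of "{p<..<q}"])
    show "F p + integral {p..y} (kern n) = F y" if "y \<in> {p<..<q}" for y
      unfolding F_def using that pq by (intro Henstock_Kurzweil_Integration.integral_combine[OF _ _ int0]) auto
  qed (use pq in auto)
qed

lemma F_cont: "continuous_on {0<..} F"
  using F_deriv by (intro continuous_at_imp_continuous_on ballI DERIV_isCont) auto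

lemma F_mono: assumes "0 < x" "x < y" shows "F x < F y"
proof (rule DERIV_pos_imp_increasing[OF assms(2)])
  fix z assume "x \<le> z" "z \<le> y"
  hence "0 < z" using assms by auto
  thus "\<exists>d. (F has_real_derivative d) (at z) \<and> 0 < d" using F_deriv kern_pos by blast
qed

abbreviation cc where "cc \<equiv> c_const n"

lemma c_pos: "0 < cc"
proof -
  have "1 / b - a * (1 / (b + 1)) \<le> F 1" using F_lower[of 1] by simp
  moreover have "a * (1 / (b + 1)) < 1" using a_lt1 b_pos by (simp add: field_simps)
  moreover have "1 < 1 / b" using b_pos a_pos by (simp add: b_def field_simps)
  moreover have "0 < T 1" using T_bounds(1)[of 1] a_pos
    by (smt (verit) divide_pos_pos exp_gt_zero)
  ultimately show ?thesis using c_split[of 1] by simp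
qed

definition G :: "real \<Rightarrow> real" where "G y = (THE x. 0 < x \<and> F x = y)"

lemma F_inj: "0 < x \<Longrightarrow> 0 < y \<Longrightarrow> F x = F y \<Longrightarrow> x = y"
  using F_mono by (metis linorder_neq_iff less_irrefl)

lemma G_F: assumes "0 < z" shows "G (F z) = z"
  unfolding G_def using assms F_inj by (intro the_equality) auto

lemma Phi_eq: "Phi_inf n s = G (cc * s)"
  unfolding Phi_inf_def G_def F_def ..

lemma F_surj: assumes "0 < y" "y < cc" shows "\<exists>x>0. F x = y"
proof -
  define p where "p = min 1 ((b * y) powr (1 / b))"
  have p: "0 < p" "p \<le> 1" unfolding p_def using assms b_pos by auto
  have "p powr b \<le> ((b * y) powr (1 / b)) powr b"
    unfolding p_def using p b_pos by (intro powr_mono2) auto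
  also have "\<dots> = b * y" using b_pos assms by (simp add: powr_powr)
  finally have "p powr b \<le> b * y" .
  hence "p powr b / b \<le> y" using b_pos by (simp add: field_simps)
  hence "F p \<le> y" using F_upper[of p] p by linarith
  define X where "X = max 1 (- ln (a * (cc - y) / 3) / a)"
  have X: "1 \<le> X" unfolding X_def by simp
  have "- ln (a * (cc - y) / 3) / a \<le> X" unfolding X_def by simp
  hence "a * (- ln (a * (cc - y) / 3) / a) \<le> a * X" using a_pos
    by (intro mult_left_mono) auto
  hence "- ln (a * (cc - y) / 3) \<le> a * X" using a_pos by simp
  hence "exp (- a * X) \<le> exp (ln (a * (cc - y) / 3))" by simp
  also have "\<dots> = a * (cc - y) / 3" using a_pos assms by simp
  finally have eX: "exp (- a * X) \<le> a * (cc - y) / 3" .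
  have "exp (- (1 + a) * X) \<le> exp (- a * X)" using X by (simp add: algebra_simps)
  hence "2 * exp (- (1 + a) * X) / (1 + a) \<le> 2 * exp (- a * X) / a"
    using a_pos by (intro frac_le) auto
  hence "T X \<le> 3 * exp (- a * X) / a" using T_bounds(2)[OF X] by simp
  also have "\<dots> \<le> cc - y" using eX a_pos by (simp add: field_simps)
  finally have "y \<le> F X" using c_split[OF X] by simp
  have "\<exists>x. p \<le> x \<and> x \<le> X \<and> F x = y"
    by (rule IVT'[of F p y X, OF \<open>F p \<le> y\<close> \<open>y \<le> F X\<close>]) (use p X in \<open>auto intro: continuous_on_subset[OF F_cont]\<close>)
  then obtain x where "p \<le> x" "F x = y" by auto
  thus ?thesis using p by (intro exI[of _ x]) auto
qed

lemma Phi_prop: assumes "0 < s" "s < 1" shows "0 < Phi_inf n s" "F (Phi_inf n s) = cc * s"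
proof -
  obtain x where x: "0 < x" "F x = cc * s" using F_surj[of "cc * s"] assms c_pos by auto
  have "Phi_inf n s = x" unfolding Phi_eq x(2)[symmetric] using G_F[OF x(1)] .
  thus "0 < Phi_inf n s" "F (Phi_inf n s) = cc * s" using x by auto
qed


abbreviation P where "P \<equiv> Phi_inf n"

lemma G_deriv: assumes "0 < x" shows "(G has_real_derivative inverse (kern n x)) (at (F x))"
proof -
  have k: "kern n x \<noteq> 0" using kern_pos[OF assms] by simp
  show ?thesis
    unfolding has_field_derivative_def
    by (rule has_derivative_inverse_strong[of "{0<..}" x F G, OF _ _ F_cont])
       (use assms k G_F F_deriv[OF assms] in \<open>auto simp: has_field_derivative_def\<close>)
qed

definition D1 where "D1 s = cc * (exp (P s) - 1) powr a"
definition D2 where "D2 s = cc ^ 2 * a * (exp (P s) - 1) powr (2 * a - 1) * exp (P s)"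

lemma P_deriv: assumes "0 < s" "s < 1" shows "(P has_real_derivative D1 s) (at s)"
proof -
  have hfun: "P = (\<lambda>s. G (cc * s))" using Phi_eq by (intro ext) auto
  have g: "(G has_real_derivative inverse (kern n (P s))) (at (cc * s))"
    using G_deriv[OF Phi_prop(1)[OF assms]] Phi_prop(2)[OF assms] by simp
  have "((\<lambda>s. G (cc * s)) has_real_derivative inverse (kern n (P s)) * cc) (at s)"
    by (rule DERIV_chain2[where g="\<lambda>s. cc * s", OF g]) (auto intro!: derivative_eq_intros)
  moreover have "inverse (kern n (P s)) * cc = D1 s"
    unfolding D1_def kern_eq using Phi_prop(1)[OF assms]
    by (simp add: powr_minus)
  ultimately show ?thesis using hfun by simp
qed

lemma deriv_P: "0 < s \<Longrightarrow> s < 1 \<Longrightarrow> deriv P s = D1 s"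
  using P_deriv by (rule DERIV_imp_deriv)

lemma D1_deriv: assumes "0 < s" "s < 1" shows "(D1 has_real_derivative D2 s) (at s)"
proof -
  have y: "0 < exp (P s) - 1" using Phi_prop(1)[OF assms] by simp
  have e: "((\<lambda>s. exp (P s) - 1) has_real_derivative exp (P s) * D1 s) (at s)"
    by (auto intro!: derivative_eq_intros P_deriv[OF assms])
  have "((\<lambda>s. (exp (P s) - 1) powr a) has_real_derivative
      a * (exp (P s) - 1) powr (a - 1) * (exp (P s) * D1 s)) (at s)"
    by (rule DERIV_chain2[OF has_real_derivative_powr[OF y] e])
  hence "(D1 has_real_derivative cc * (a * (exp (P s) - 1) powr (a - 1) * (exp (P s) * D1 s))) (at s)"
    unfolding D1_def[abs_def] by (rule DERIV_cmult)
  moreover have "cc * (a * (exp (P s) - 1) powr (a - 1) * (exp (P s) * D1 s)) = D2 s"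
  proof -
    have "(exp (P s) - 1) powr (a - 1) * (exp (P s) - 1) powr a = (exp (P s) - 1) powr (2 * a - 1)"
      using y by (simp add: powr_add[symmetric])
    thus ?thesis unfolding D1_def D2_def by (simp add: power2_eq_square algebra_simps)
  qed
  ultimately show ?thesis by simp
qed

lemma deriv_deriv_P: assumes "0 < s" "s < 1" shows "deriv (deriv P) s = D2 s"
proof -
  have "(deriv P has_real_derivative D2 s) (at s)"
    by (rule has_field_derivative_transform_within_open[OF D1_deriv[OF assms], of "{0<..<1}"])
       (use assms deriv_P in auto)
  thus ?thesis by (rule DERIV_imp_deriv)
qed

lemma Linf_c2_eq: "0 < s \<Longrightarrow> s < 1 \<Longrightarrow> Linf_c2 n s = 1 / D2 s"
  unfolding Linf_c2_def by (simp add: deriv_deriv_P)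

lemma Linf_c1_eq: "0 < s \<Longrightarrow> s < 1 \<Longrightarrow> Linf_c1 n s = (real n - 1) / D1 s"
  unfolding Linf_c1_def by (simp add: deriv_P)


lemma F1_pos: "0 < F 1"
proof -
  have "1 / b - a * (1 / (b + 1)) \<le> F 1" using F_lower[of 1] by simp
  moreover have "a * (1 / (b + 1)) < 1" using a_lt1 b_pos by (simp add: field_simps)
  moreover have "1 < 1 / b" using b_pos a_pos by (simp add: b_def field_simps)
  ultimately show ?thesis by linarith
qed

lemma F1_lt: "F 1 < cc"
proof -
  have "0 < T 1" using T_bounds(1)[of 1] a_pos
    by (smt (verit) divide_pos_pos exp_gt_zero)
  thus ?thesis using c_split[of 1] by simp
qed

lemma exp_m1: "exp (-1::real) \<le> 1/2"
proof -
  have "2 \<le> exp (1::real)" using exp_ge_add_one_self[of 1] by simp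
  thus ?thesis by (simp add: exp_minus field_simps)
qed

lemma near1_core: assumes s: "F 1 / cc < s" "s < 1"
  shows "\<exists>E \<theta>. 0 \<le> E \<and> E \<le> 1/2 \<and> 0 \<le> \<theta> \<and> \<theta> \<le> E \<and> E \<le> (a * cc) ^ (n + 1) * (1 - s) ^ (n + 1) \<and>
     Linf_c2 n s = 1 / (real n + 1) * (1 - s)\<^sup>2 * ((1 - E) powr (1 - 2 * a) / (1 + \<theta>)\<^sup>2) \<and>
     - Linf_c1 n s = 1 / (real n + 1) * (- (real n - 1) * (1 - s)) * ((1 - E) powr (- a) / (1 + \<theta>))"
proof -
  have s0: "0 < s" using s F1_pos c_pos by (smt (verit) divide_pos_pos)
  define x where "x = P s"
  have x0: "0 < x" and Fx: "F x = cc * s" using Phi_prop[OF s0 s(2)] by (auto simp: x_def)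
  have x1: "1 \<le> x"
  proof (rule ccontr)
    assume "\<not> 1 \<le> x"
    hence "F x < F 1" using F_mono[OF x0] by simp
    hence "s < F 1 / cc" using Fx c_pos by (simp add: field_simps)
    thus False using s by simp
  qed
  have Tx: "T x = cc * (1 - s)" using c_split[OF x1] Fx by (simp add: algebra_simps)
  define u where "u = exp (- a * x)"
  define E where "E = exp (- x)"
  have u0: "0 < u" unfolding u_def by simp
  have E0: "0 \<le> E" unfolding E_def by simp
  have Eu: "E = u ^ (n + 1)"
  proof -
    have h1: "real (n + 1) * (- a * x) = - x" using na by (simp add: algebra_simps)
    have "exp (- x) = exp (real (n + 1) * (- a * x))" by (simp only: h1)
    moreover have "exp (real (n + 1) * (- a * x)) = exp (- a * x) ^ (n + 1)"
      by (rule exp_of_nat_mult)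
    ultimately show ?thesis unfolding E_def u_def by (rule trans)
  qed
  have Ehalf: "E \<le> 1/2" unfolding E_def using x1 exp_m1 by (smt (verit) exp_le_cancel_iff)
  have TL: "u / a \<le> T x" using T_bounds(1)[OF x1] unfolding u_def .
  have eE: "exp (- (1 + a) * x) = u * E" unfolding u_def E_def by (simp add: exp_add[symmetric] algebra_simps)
  have TU: "T x \<le> u / a + 2 * (u * E) / (1 + a)" using T_bounds(2)[OF x1] unfolding u_def eE .
  define \<theta> where "\<theta> = a * T x / u - 1"
  have Tth: "T x = u * (1 + \<theta>) / a" unfolding \<theta>_def using u0 a_pos by (simp add: field_simps)
  have th0: "0 \<le> \<theta>" unfolding \<theta>_def using TL u0 a_pos by (simp add: field_simps)
  have "a * T x \<le> a * (u / a + 2 * (u * E) / (1 + a))" using TU a_pos by (intro mult_left_mono) auto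
  also have "\<dots> = u + a * (2 * (u * E) / (1 + a))" using a_pos by (simp add: distrib_left)
  also have "\<dots> = u * (1 + 2 * a * E / (1 + a))" by (simp add: algebra_simps times_divide_eq_right)
  finally have "a * T x / u \<le> 1 + 2 * a * E / (1 + a)" using u0 by (simp add: divide_le_eq mult.commute)
  hence "\<theta> \<le> 2 * a * E / (1 + a)" unfolding \<theta>_def by simp
  also have "\<dots> \<le> E" using a_pos a_lt1 E0 mult_left_mono[of a 1 E] by (simp add: field_simps)
  finally have thE: "\<theta> \<le> E" .
  have "u \<le> a * cc * (1 - s)" using TL Tx a_pos by (simp add: field_simps)
  hence "u ^ (n + 1) \<le> (a * cc * (1 - s)) ^ (n + 1)" using u0 by (intro power_mono) auto
  hence Ebound: "E \<le> (a * cc) ^ (n + 1) * (1 - s) ^ (n + 1)" unfolding Eu by (simp only: power_mult_distrib)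
  have eta: "1 - s = u * (1 + \<theta>) / (a * cc)" using Tx Tth c_pos a_pos by (simp add: field_simps)
  have E1: "0 < 1 - E" using Ehalf by simp
  have yE: "exp x - 1 = exp x * (1 - E)" unfolding E_def by (simp add: exp_minus field_simps)
  have uX: "u = 1 / exp (a * x)" unfolding u_def by (simp add: exp_minus divide_inverse)
  define z2 where "z2 = (1 - E) powr (1 - 2 * a)"
  define z1 where "z1 = (1 - E) powr a"
  have z20: "0 < z2" and z10: "0 < z1" using E1 by (auto simp: z2_def z1_def)
  have yp2: "(exp x - 1) powr (2 * a - 1) = exp ((2 * a - 1) * x) / z2"
  proof -
    have "(exp x - 1) powr (2 * a - 1) = exp x powr (2 * a - 1) * (1 - E) powr (2 * a - 1)"
      unfolding yE using E1 by (auto intro: powr_mult)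
    moreover have "exp x powr (2 * a - 1) = exp ((2 * a - 1) * x)" by (simp add: powr_def)
    moreover have "(1 - E) powr (2 * a - 1) = 1 / z2"
      unfolding z2_def using powr_minus[of "1 - E" "1 - 2 * a"] by (simp add: divide_inverse)
    ultimately show ?thesis by simp
  qed
  have yp1: "(exp x - 1) powr a = exp (a * x) * z1"
  proof -
    have "(exp x - 1) powr a = exp x powr a * (1 - E) powr a"
      unfolding yE using E1 by (auto intro: powr_mult)
    moreover have "exp x powr a = exp (a * x)" by (simp add: powr_def)
    ultimately show ?thesis unfolding z1_def by simp
  qed
  have ex2: "exp ((2 * a - 1) * x) * exp x = exp (a * x) * exp (a * x)"
    by (simp add: exp_add[symmetric] algebra_simps)
  have D2s: "D2 s = cc\<^sup>2 * a * exp (a * x) * exp (a * x) / z2"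
    unfolding D2_def x_def[symmetric] yp2 using ex2 by (simp add: field_simps)
  have D1s: "D1 s = cc * exp (a * x) * z1"
    unfolding D1_def x_def[symmetric] yp1 by simp
  have "Linf_c2 n s = 1 / (real n + 1) * (1 - s)\<^sup>2 * (z2 / (1 + \<theta>)\<^sup>2)"
  proof -
    have "Linf_c2 n s = z2 / (cc\<^sup>2 * a * exp (a * x) * exp (a * x))"
      using Linf_c2_eq[OF s0 s(2)] D2s by simp
    also have "\<dots> = a * (u * (1 + \<theta>) / (a * cc))\<^sup>2 * (z2 / (1 + \<theta>)\<^sup>2)"
      unfolding uX using a_pos c_pos th0 by (intro alg2) auto
    also have "\<dots> = 1 / (real n + 1) * (1 - s)\<^sup>2 * (z2 / (1 + \<theta>)\<^sup>2)"
      unfolding eta[symmetric] by (simp add: a_def)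
    finally show ?thesis .
  qed
  moreover have "- Linf_c1 n s = 1 / (real n + 1) * (- (real n - 1) * (1 - s)) * ((1 - E) powr (- a) / (1 + \<theta>))"
  proof -
    have zm: "(1 - E) powr (- a) = 1 / z1" unfolding z1_def using powr_minus[of "1-E" a] by (simp add: divide_inverse)
    have "- Linf_c1 n s = - (real n - 1) / (cc * exp (a * x) * z1)"
      using Linf_c1_eq[OF s0 s(2)] D1s by (simp add: minus_divide_left)
    also have "\<dots> = a * (- (real n - 1) * (u * (1 + \<theta>) / (a * cc))) * (1 / z1 / (1 + \<theta>))"
      unfolding uX using a_pos c_pos th0 z10 by (intro alg1) auto
    also have "\<dots> = 1 / (real n + 1) * (- (real n - 1) * (1 - s)) * ((1 - E) powr (- a) / (1 + \<theta>))"
      unfolding eta[symmetric] zm by (simp add: a_def)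
    finally show ?thesis .
  qed
  ultimately show ?thesis using E0 Ehalf th0 thE Ebound unfolding z2_def by blast
qed


lemma near0_core: assumes s: "0 < s" "s < F 1 / cc" "s < (1/2) powr b / (2 * b * cc)" and n2: "2 \<le> n"
  shows "\<exists>x R2 R1. 0 \<le> x \<and> x \<le> (2 * b * cc) powr (1 / b) * s powr ((real n + 1) / real n) \<and>
     \<bar>R2 - 1\<bar> \<le> 6 * x \<and> \<bar>R1 - 1\<bar> \<le> 3 * x \<and>
     Linf_c2 n s = 1 / d_const n * Lminus_c2 n s * R2 \<and>
     Linf_c1 n s = 1 / d_const n * Lminus_c1 n s * R1"
proof -
  have "F 1 / cc < 1" using F1_lt c_pos by simp
  hence s1: "s < 1" using s(2) by linarith
  define x where "x = P s"
  have x0: "0 < x" and Fx: "F x = cc * s" using Phi_prop[OF s(1) s1] by (auto simp: x_def)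
  have x1: "x < 1"
  proof (rule ccontr)
    assume "\<not> x < 1"
    hence "F 1 \<le> F x" using F_mono[of 1 x] by (cases "x = 1") auto
    hence "F 1 / cc \<le> s" using Fx c_pos by (simp add: divide_le_eq mult.commute)
    thus False using s by simp
  qed
  define N where "N = real n"
  define k where "k = 1 / N"
  have N0: "0 < N" and N1: "1 < N" using n2 by (auto simp: N_def)
  have Nk: "N * k = 1" using N0 by (simp add: k_def)
  have k0: "0 < k" "k \<le> 1" using N1 by (auto simp: k_def)
  have bNa: "b = N * a" using b_eq by (simp add: N_def)
  have aN: "a * (N + 1) = 1" using na by (simp add: N_def mult.commute)
  have xb0: "0 < x powr b" using x0 by simp
  have xb1: "x powr (b + 1) = x powr b * x" using x0 by (simp add: powr_add)
  define \<theta> where "\<theta> = 1 - b * F x / x powr b"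
  have Fth: "F x = x powr b * (1 - \<theta>) / b" unfolding \<theta>_def using xb0 b_pos by (simp add: field_simps)
  have th0: "0 \<le> \<theta>" unfolding \<theta>_def using F_upper[of x] x0 xb0 b_pos
    by (simp add: field_simps)
  have thx: "\<theta> \<le> a * b / (b + 1) * x"
  proof -
    have "x powr b / b - a * (x powr b * x / (b + 1)) \<le> F x" using F_lower[of x] x0 xb1 by simp
    hence "b * (x powr b / b - a * (x powr b * x / (b + 1))) \<le> b * F x"
      using b_pos by (intro mult_left_mono) auto
    moreover have "b * (x powr b / b - a * (x powr b * x / (b + 1))) = x powr b * (1 - a * b / (b + 1) * x)"
      using b_pos by (simp add: right_diff_distrib algebra_simps)
    ultimately have "x powr b * (1 - a * b / (b + 1) * x) \<le> b * F x" by simp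
    hence "1 - a * b / (b + 1) * x \<le> b * F x / x powr b" using xb0 by (simp add: le_divide_eq mult.commute)
    thus ?thesis unfolding \<theta>_def by simp
  qed
  have ab: "a * b / (b + 1) \<le> 1/2"
  proof -
    have "a * b \<le> (1/2) * 1" using a_pos a_le b_pos a_pos by (intro mult_mono) (auto simp: b_def)
    also have "\<dots> \<le> (1/2) * (b + 1)" using b_pos by simp
    finally show ?thesis using b_pos by (simp add: divide_le_eq)
  qed
  have thx2: "\<theta> \<le> x / 2" using thx ab x0 mult_right_mono[OF ab, of x] by linarith
  have th1: "\<theta> \<le> 1/2" using thx2 x1 by linarith
  have scc: "cc * s = x powr b * (1 - \<theta>) / b" using Fx Fth by simp
  have "x powr b / (2 * b) \<le> cc * s"
  proof -
    have "x powr b * (1/2) \<le> x powr b * (1 - \<theta>)" using th1 xb0 by (intro mult_left_mono) auto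
    thus ?thesis unfolding scc using b_pos by (simp add: divide_right_mono field_simps)
  qed
  hence xbs: "x powr b \<le> 2 * b * cc * s" using b_pos by (simp add: divide_le_eq mult.commute mult.left_commute)
  have xhalf: "x \<le> 1/2"
  proof (rule ccontr)
    assume "\<not> x \<le> 1/2"
    hence "(1/2) powr b \<le> x powr b" using b_pos by (intro powr_mono2) auto
    moreover have "2 * b * cc * s < (1/2) powr b" using s(3) b_pos c_pos by (simp add: less_divide_eq mult.commute mult.left_commute)
    ultimately show False using xbs by simp
  qed
  have xK: "x \<le> (2 * b * cc) powr (1 / b) * s powr ((real n + 1) / real n)"
  proof -
    have "x = (x powr b) powr (1 / b)" using x0 b_pos by (simp add: powr_powr)
    also have "\<dots> \<le> (2 * b * cc * s) powr (1 / b)" using xbs xb0 b_pos by (intro powr_mono2) auto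
    also have "\<dots> = (2 * b * cc) powr (1 / b) * s powr (1 / b)" using b_pos c_pos s by (simp add: powr_mult)
    finally have "x \<le> (2 * b * cc) powr (1 / b) * s powr (1 / b)" .
    moreover have "1 / b = (real n + 1) / real n" unfolding b_def a_def using n2 by (simp add: field_simps)
    hence "s powr (1 / b) = s powr ((real n + 1) / real n)" by simp
    ultimately show ?thesis by simp
  qed
  have thx3: "\<theta> \<le> x" using thx2 x0 by linarith
  define y where "y = exp x - 1"
  have y0: "0 < y" using x0 by (simp add: y_def)
  have yx: "x \<le> y" using exp_ge_add_one_self[of x] unfolding y_def by linarith
  have yx2: "y \<le> x * (1 + 2 * x)"
  proof -
    have "1 - x \<le> exp (-x)" using exp_ge_add_one_self[of "-x"] by simp
    hence "(1 - x) * exp x \<le> exp (-x) * exp x" by (intro mult_right_mono) auto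
    hence "exp x - 1 \<le> x * exp x" by (simp add: exp_minus field_simps)
    moreover have "exp x \<le> 1 + 2 * x"
      using exp_le_inv[of x] inv_bound[of x] x0 xhalf x1 by simp
    ultimately show ?thesis unfolding y_def using x0 by (smt (verit) mult_left_mono)
  qed
  have omt: "0 < 1 - \<theta>" using th1 by simp
  define R2 where "R2 = (y / x) powr (1 - 2 * a) * exp (- x) * (1 - \<theta>) powr (- (1 - k))"
  define R1 where "R1 = (x / y) powr a * (1 - \<theta>) powr k"
  have dd: "d_const n = b powr k * cc powr (1 + k)"
  proof -
    have "real n / (real n + 1) = b" unfolding b_def a_def using n2 by (simp add: field_simps)
    moreover have "(real n + 1) / real n = 1 + k" unfolding k_def N_def using n2 by (simp add: field_simps)
    ultimately show ?thesis unfolding d_const_def k_def N_def by simp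
  qed
  have d0: "0 < d_const n" unfolding dd using b_pos c_pos by simp
  have lnd: "ln (d_const n) = k * ln b + (1 + k) * ln cc"
    unfolding dd using b_pos c_pos by (simp add: ln_mult ln_powr)
  have sx: "s = x powr b * (1 - \<theta>) / (b * cc)"
  proof -
    have "s = (cc * s) / cc" using c_pos by simp
    also have "\<dots> = x powr b * (1 - \<theta>) / (b * cc)" unfolding scc by simp
    finally show ?thesis .
  qed
  have lns: "ln s = b * ln x + ln (1 - \<theta>) - ln b - ln cc"
    unfolding sx using x0 omt b_pos c_pos by (simp add: ln_mult ln_div ln_powr)
  have lnb: "ln b = ln N + ln a" unfolding bNa using N0 a_pos by (simp add: ln_mult)
  have Lm2: "Lminus_c2 n s = N * s powr (1 - k)"
    unfolding Lminus_c2_def N_def k_def using N0 by (simp add: N_def diff_divide_distrib)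
  have Lm1: "Lminus_c1 n s = (N - 1) * s powr (- k)"
    unfolding Lminus_c1_def N_def k_def by simp
  have R2pos: "0 < R2" unfolding R2_def using x0 y0 omt by simp
  have R1pos: "0 < R1" unfolding R1_def using x0 y0 omt by simp
  have D2pos: "0 < D2 s" unfolding D2_def x_def[symmetric] y_def[symmetric] using c_pos a_pos y0 by simp
  have D1pos: "0 < D1 s" unfolding D1_def x_def[symmetric] y_def[symmetric] using c_pos y0 by simp
  have lnD2: "ln (D2 s) = 2 * ln cc + ln a + (2 * a - 1) * ln y + x"
    unfolding D2_def x_def[symmetric] y_def[symmetric] using c_pos a_pos y0
    by (simp add: ln_mult ln_powr ln_realpow)
  have lnD1: "ln (D1 s) = ln cc + a * ln y"
    unfolding D1_def x_def[symmetric] y_def[symmetric] using c_pos y0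
    by (simp add: ln_mult ln_powr)
  have lnR2: "ln R2 = (1 - 2 * a) * (ln y - ln x) - x - (1 - k) * ln (1 - \<theta>)"
    unfolding R2_def using x0 y0 omt by (simp add: ln_mult ln_div ln_powr algebra_simps)
  have lnR1: "ln R1 = a * (ln x - ln y) + k * ln (1 - \<theta>)"
    unfolding R1_def using x0 y0 omt by (simp add: ln_mult ln_div ln_powr)
  have c2: "Linf_c2 n s = 1 / d_const n * Lminus_c2 n s * R2"
  proof -
    have pos: "0 < 1 / d_const n * Lminus_c2 n s * R2" unfolding Lm2 using d0 N0 s R2pos by simp
    have "ln (1 / d_const n * Lminus_c2 n s * R2) = - ln (d_const n) + (ln N + (1 - k) * ln s) + ln R2"
      unfolding Lm2 using d0 N0 s R2pos by (simp add: ln_mult ln_div ln_powr)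
    also have "\<dots> = - (2 * ln cc + ln a + (2 * a - 1) * ln y + x)"
      unfolding lnd lnR2
      using ln_id2[OF Nk aN bNa lnb lns, of "ln y" x] by linarith
    also have "\<dots> = ln (1 / D2 s)" using D2pos lnD2 by (simp add: ln_div)
    finally have "ln (1 / d_const n * Lminus_c2 n s * R2) = ln (1 / D2 s)" .
    hence "1 / d_const n * Lminus_c2 n s * R2 = 1 / D2 s" using pos D2pos by (simp add: ln_inj_iff)
    thus ?thesis using Linf_c2_eq[OF s(1) s1] by simp
  qed
  have c1: "Linf_c1 n s = 1 / d_const n * Lminus_c1 n s * R1"
  proof -
    have Nm: "0 < N - 1" using N1 by simp
    have pos: "0 < 1 / d_const n * (s powr (- k)) * R1" using d0 s R1pos by simp
    have "ln (1 / d_const n * (s powr (- k)) * R1) = - ln (d_const n) + (- k) * ln s + ln R1"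
      using d0 s R1pos by (simp add: ln_mult ln_div ln_powr)
    also have "\<dots> = - (ln cc + a * ln y)"
      unfolding lnd lnR1
      using ln_id1[OF Nk bNa lns, of "ln y"] by linarith
    also have "\<dots> = ln (1 / D1 s)" using D1pos lnD1 by (simp add: ln_div)
    finally have "1 / d_const n * (s powr (- k)) * R1 = 1 / D1 s" using pos D1pos by (simp add: ln_inj_iff)
    hence h: "(N - 1) * (1 / d_const n * (s powr (- k)) * R1) = (N - 1) / D1 s" by simp
    have e: "1 / d_const n * ((N - 1) * s powr (- k)) * R1 = (N - 1) * (1 / d_const n * s powr (- k) * R1)"
      by (simp only: mult_ac)
    show ?thesis unfolding Lm1 e h using Linf_c1_eq[OF s(1) s1] by (simp add: N_def)
  qed
  have pa: "0 \<le> 1 - 2 * a" "1 - 2 * a \<le> 1" using a_pos a_le by auto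
  have A2: "1 \<le> (y / x) powr (1 - 2 * a) \<and> (y / x) powr (1 - 2 * a) \<le> y / x"
    using yx x0 pa by (intro pw_ge1) (auto simp: le_divide_eq)
  have yx3: "y / x \<le> 1 + 2 * x" using yx2 x0 by (simp add: divide_le_eq mult.commute)
  have B2: "1 - x \<le> exp (- x) \<and> exp (- x) \<le> 1" using exp_ge_add_one_self[of "-x"] x0 by simp
  have C2: "1 \<le> (1 - \<theta>) powr (- (1 - k)) \<and> (1 - \<theta>) powr (- (1 - k)) \<le> 1 / (1 - \<theta>)"
    using omt th0 k0 by (intro pw_neg) auto
  have C2': "1 / (1 - \<theta>) \<le> 1 + 2 * x" using inv_bound[OF th0 th1] thx3 by linarith
  have bR2: "\<bar>R2 - 1\<bar> \<le> 6 * x" unfolding R2_def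
    by (rule bnd_prod3) (use x0 xhalf A2 yx3 B2 C2 C2' in auto)
  have xy1: "x / y \<le> 1" using yx y0 by simp
  have xy2: "1 - 2 * x \<le> x / y"
  proof -
    have "(1 - 2 * x) * y \<le> (1 - 2 * x) * (x * (1 + 2 * x))"
      using yx2 xhalf by (intro mult_left_mono) auto
    also have "\<dots> = x * (1 - 4 * (x * x))" by (simp add: algebra_simps)
    also have "\<dots> \<le> x" using x0 by (simp add: mult_left_le)
    finally show ?thesis using y0 by (simp add: le_divide_eq)
  qed
  have A1: "x / y \<le> (x / y) powr a \<and> (x / y) powr a \<le> 1"
    using xy1 x0 y0 a_pos a_lt1 by (intro pw_le1) auto
  have B1: "1 - \<theta> \<le> (1 - \<theta>) powr k \<and> (1 - \<theta>) powr k \<le> 1"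
    using omt th0 k0 by (intro pw_le1) auto
  have bR1: "\<bar>R1 - 1\<bar> \<le> 3 * x" unfolding R1_def
    by (rule bnd_prod2) (use x0 xhalf A1 xy2 B1 thx3 in auto)
  show ?thesis using x0 xK bR2 bR1 c2 c1 by (intro exI[of _ x] exI[of _ R2] exI[of _ R1]) auto
qed


lemma res1_c2: "\<exists>h. h \<in> O[at_left 1](\<lambda>s. (1 - s) ^ (n + 1)) \<and>
          (\<forall>\<^sub>F s in at_left 1. Linf_c2 n s = (1 / (real n + 1)) * Lplus_c2 n (1 - s) * (1 + h s))"
proof (rule witness[where K = "3 * (a * cc) ^ (n + 1)"])
  have "F 1 / cc < 1" using F1_lt c_pos by simp
  from eventually_at_left_real[OF this]
  show "\<forall>\<^sub>F s in at_left 1. \<exists>r. Linf_c2 n s = 1 / (real n + 1) * Lplus_c2 n (1 - s) * (1 + r) \<and>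
      \<bar>r\<bar> \<le> 3 * (a * cc) ^ (n + 1) * \<bar>(1 - s) ^ (n + 1)\<bar>"
  proof (rule eventually_mono)
    fix s assume "s \<in> {F 1 / cc<..<1}"
    then obtain E \<theta> where h: "0 \<le> E" "E \<le> 1/2" "0 \<le> \<theta>" "\<theta> \<le> E"
      "E \<le> (a * cc) ^ (n + 1) * (1 - s) ^ (n + 1)"
      "Linf_c2 n s = 1 / (real n + 1) * (1 - s)\<^sup>2 * ((1 - E) powr (1 - 2 * a) / (1 + \<theta>)\<^sup>2)"
      using near1_core[of s] by auto
    have z: "1 - E \<le> (1 - E) powr (1 - 2 * a) \<and> (1 - E) powr (1 - 2 * a) \<le> 1"
      using h a_pos a_le by (intro pw_le1) auto
    have b: "\<bar>(1 - E) powr (1 - 2 * a) / (1 + \<theta>)\<^sup>2 - 1\<bar> \<le> 3 * E"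
      using h z by (intro bnd_n2) auto
    have s1: "s < 1" using \<open>s \<in> _\<close> by simp
    show "\<exists>r. Linf_c2 n s = 1 / (real n + 1) * Lplus_c2 n (1 - s) * (1 + r) \<and>
      \<bar>r\<bar> \<le> 3 * (a * cc) ^ (n + 1) * \<bar>(1 - s) ^ (n + 1)\<bar>"
      using h(5,6) b s1 by (intro exI[of _ "(1 - E) powr (1 - 2 * a) / (1 + \<theta>)\<^sup>2 - 1"])
        (auto simp: Lplus_c2_def)
  qed
qed

lemma res1_c1: "\<exists>h. h \<in> O[at_left 1](\<lambda>s. (1 - s) ^ (n + 1)) \<and>
          (\<forall>\<^sub>F s in at_left 1. - Linf_c1 n s = (1 / (real n + 1)) * Lplus_c1 n (1 - s) * (1 + h s))"
proof (rule witness[where K = "2 * (a * cc) ^ (n + 1)"])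
  have "F 1 / cc < 1" using F1_lt c_pos by simp
  from eventually_at_left_real[OF this]
  show "\<forall>\<^sub>F s in at_left 1. \<exists>r. - Linf_c1 n s = 1 / (real n + 1) * Lplus_c1 n (1 - s) * (1 + r) \<and>
      \<bar>r\<bar> \<le> 2 * (a * cc) ^ (n + 1) * \<bar>(1 - s) ^ (n + 1)\<bar>"
  proof (rule eventually_mono)
    fix s assume "s \<in> {F 1 / cc<..<1}"
    then obtain E \<theta> where h: "0 \<le> E" "E \<le> 1/2" "0 \<le> \<theta>" "\<theta> \<le> E"
      "E \<le> (a * cc) ^ (n + 1) * (1 - s) ^ (n + 1)"
      "- Linf_c1 n s = 1 / (real n + 1) * (- (real n - 1) * (1 - s)) * ((1 - E) powr (- a) / (1 + \<theta>))"
      using near1_core[of s] by auto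
    have E1: "0 < 1 - E" using h by simp
    have z: "1 \<le> (1 - E) powr (- a) \<and> (1 - E) powr (- a) \<le> 1 / (1 - E)"
      using h a_pos a_lt1 E1 by (intro pw_neg) auto
    have z2: "1 / (1 - E) \<le> 1 + 2 * E" using inv_bound h by simp
    have b: "\<bar>(1 - E) powr (- a) / (1 + \<theta>) - 1\<bar> \<le> 2 * E"
      using h z z2 by (intro bnd_n1) auto
    have s1: "s < 1" using \<open>s \<in> _\<close> by simp
    show "\<exists>r. - Linf_c1 n s = 1 / (real n + 1) * Lplus_c1 n (1 - s) * (1 + r) \<and>
      \<bar>r\<bar> \<le> 2 * (a * cc) ^ (n + 1) * \<bar>(1 - s) ^ (n + 1)\<bar>"
      using h(5,6) b s1 by (intro exI[of _ "(1 - E) powr (- a) / (1 + \<theta>) - 1"])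
        (auto simp: Lplus_c1_def)
  qed
qed

lemma s0_pos: "0 < min (F 1 / cc) ((1/2) powr b / (2 * b * cc))"
  using F1_pos c_pos b_pos by simp

lemma res0_c2: assumes n2: "2 \<le> n"
  shows "\<exists>h. h \<in> O[at_right 0](\<lambda>s. s powr ((real n + 1) / real n)) \<and>
          (\<forall>\<^sub>F s in at_right 0. Linf_c2 n s = (1 / d_const n) * Lminus_c2 n s * (1 + h s))"
proof (rule witness[where K = "6 * (2 * b * cc) powr (1 / b)"])
  from eventually_at_right_real[OF s0_pos]
  show "\<forall>\<^sub>F s in at_right 0. \<exists>r. Linf_c2 n s = 1 / d_const n * Lminus_c2 n s * (1 + r) \<and>
      \<bar>r\<bar> \<le> 6 * (2 * b * cc) powr (1 / b) * \<bar>s powr ((real n + 1) / real n)\<bar>"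
  proof (rule eventually_mono)
    fix s assume "s \<in> {0<..<min (F 1 / cc) ((1/2) powr b / (2 * b * cc))}"
    hence s: "0 < s" "s < F 1 / cc" "s < (1/2) powr b / (2 * b * cc)" by auto
    obtain x R2 R1 where h: "0 \<le> x" "x \<le> (2 * b * cc) powr (1 / b) * s powr ((real n + 1) / real n)"
      "\<bar>R2 - 1\<bar> \<le> 6 * x" "Linf_c2 n s = 1 / d_const n * Lminus_c2 n s * R2"
      using near0_core[OF s n2] by auto
    show "\<exists>r. Linf_c2 n s = 1 / d_const n * Lminus_c2 n s * (1 + r) \<and>
      \<bar>r\<bar> \<le> 6 * (2 * b * cc) powr (1 / b) * \<bar>s powr ((real n + 1) / real n)\<bar>"
      using h by (intro exI[of _ "R2 - 1"]) auto
  qed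
qed

lemma res0_c1: assumes n2: "2 \<le> n"
  shows "\<exists>h. h \<in> O[at_right 0](\<lambda>s. s powr ((real n + 1) / real n)) \<and>
          (\<forall>\<^sub>F s in at_right 0. Linf_c1 n s = (1 / d_const n) * Lminus_c1 n s * (1 + h s))"
proof (rule witness[where K = "3 * (2 * b * cc) powr (1 / b)"])
  from eventually_at_right_real[OF s0_pos]
  show "\<forall>\<^sub>F s in at_right 0. \<exists>r. Linf_c1 n s = 1 / d_const n * Lminus_c1 n s * (1 + r) \<and>
      \<bar>r\<bar> \<le> 3 * (2 * b * cc) powr (1 / b) * \<bar>s powr ((real n + 1) / real n)\<bar>"
  proof (rule eventually_mono)
    fix s assume "s \<in> {0<..<min (F 1 / cc) ((1/2) powr b / (2 * b * cc))}"
    hence s: "0 < s" "s < F 1 / cc" "s < (1/2) powr b / (2 * b * cc)" by auto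
    obtain x R2 R1 where h: "0 \<le> x" "x \<le> (2 * b * cc) powr (1 / b) * s powr ((real n + 1) / real n)"
      "\<bar>R1 - 1\<bar> \<le> 3 * x" "Linf_c1 n s = 1 / d_const n * Lminus_c1 n s * R1"
      using near0_core[OF s n2] by auto
    show "\<exists>r. Linf_c1 n s = 1 / d_const n * Lminus_c1 n s * (1 + r) \<and>
      \<bar>r\<bar> \<le> 3 * (2 * b * cc) powr (1 / b) * \<bar>s powr ((real n + 1) / real n)\<bar>"
      using h by (intro exI[of _ "R1 - 1"]) auto
  qed
qed

lemma d_pos: "0 < d_const n"
  unfolding d_const_def using c_pos n1 by (intro mult_pos_pos) auto

end

theorem lemma4p2:
  fixes n :: nat
  assumes "n \<ge> 2"
  shows
    "(\<forall>s. Linf_c0 n s = (1 / (real n + 1)) * Lplus_c0 n (1 - s))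
   \<and> (\<exists>h. h \<in> O[at_left 1](\<lambda>s. (1 - s) ^ (n + 1)) \<and>
          (\<forall>\<^sub>F s in at_left 1. Linf_c2 n s = (1 / (real n + 1)) * Lplus_c2 n (1 - s) * (1 + h s)))
   \<and> (\<exists>h. h \<in> O[at_left 1](\<lambda>s. (1 - s) ^ (n + 1)) \<and>
          (\<forall>\<^sub>F s in at_left 1. - Linf_c1 n s = (1 / (real n + 1)) * Lplus_c1 n (1 - s) * (1 + h s)))
   \<and> (\<forall>s. Linf_c0 n s = (1 / d_const n) * Lminus_c0 n s)
   \<and> (\<exists>h. h \<in> O[at_right 0](\<lambda>s. s powr ((real n + 1) / real n)) \<and>
          (\<forall>\<^sub>F s in at_right 0. Linf_c2 n s = (1 / d_const n) * Lminus_c2 n s * (1 + h s)))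
   \<and> (\<exists>h. h \<in> O[at_right 0](\<lambda>s. s powr ((real n + 1) / real n)) \<and>
          (\<forall>\<^sub>F s in at_right 0. Linf_c1 n s = (1 / d_const n) * Lminus_c1 n s * (1 + h s)))"
proof -
  interpret L n using assms by unfold_locales simp
  have c0a: "\<forall>s. Linf_c0 n s = (1 / (real n + 1)) * Lplus_c0 n (1 - s)"
  proof
    fix s
    have "real n + 1 \<noteq> 0" by (metis of_nat_Suc of_nat_eq_0_iff nat.distinct(1) add.commute)
    hence "1 / (real n + 1) * (real n + 1) = 1" by simp
    hence "1 / (real n + 1) * (- (real n + 1)) = -1" by (simp only: mult_minus_right)
    thus "Linf_c0 n s = (1 / (real n + 1)) * Lplus_c0 n (1 - s)" unfolding Linf_c0_def Lplus_c0_def by simp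
  qed
  have c0b: "\<forall>s. Linf_c0 n s = (1 / d_const n) * Lminus_c0 n s"
    using d_pos by (simp add: Linf_c0_def Lminus_c0_def)
  show ?thesis using c0a c0b res1_c2 res1_c1 res0_c2[OF assms] res0_c1[OF assms] by blast
qed

end
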